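(* Let $(M,g)$ be a $d$-dimensional Lorentzian manifold with $d\ge 4$, $p\in M$, and $\{\ell,n,m^3,\dots,m^d\}$ a null frame at $p$. Suppose the Weyl tensor $C$ at $p$ is invariant under the subgroup of the Lorentz group that fixes $\ell$ and $n$ and acts as $SO(d-2)$, in its standard representation, on $\mathrm{span}\{m^3,\dots,m^d\}$. Consider the Weyl operator $\mathsf C$ on bivectors at $p$, $(\mathsf C F)^{\mu\nu}=\tfrac12 C^{\mu\nu}{}_{\alpha\beta}F^{\alpha\beta}$. Then the eigenvalues of $\mathsf C$ (with multiplicities) are: (i) if $d=4$: $-\tfrac14(\bar R+2iA_{34})$ and $-\tfrac14(\bar R-2iA_{34})$, each with multiplicity $2$, and $\tfrac12(\bar R+2iA_{34})$, $\tfrac12(\bar R-2iA_{34})$, each with multiplicity $1$; (ii) if $d>4$: $-\frac{1}{2(d-2)}\bar R$ with multiplicity $2(d-2)$, $\tfrac12\bar R$ with multiplicity $1$, and $\frac{1}{(d-2)(d-3)}\bar R$ with multiplicity $\tfrac{(d-2)(d-3)}{2}$.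
   Context: Null frame convention: $g=2\,\ell\, n+\delta_{ij}m^im^j$, i.e. $g(\ell,n)=1$, $g(m^i,m^j)=\delta_{ij}$, all other products zero. Frame indices: $0$ refers to $\ell$, $1$ to $n$, $i,j,k\in\{3,\dots,d\}$ to the $m^i$. $C_{abcd}$ are the frame components of the Weyl tensor. Define $\bar R_{ij}=\sum_k C_{kikj}$, $\bar R=\sum_i\bar R_{ii}$, and $A_{34}=C_{0134}$ (the frame component with indices $\ell,n,m^3,m^4$). *)

theory Defs
  imports "Jordan_Normal_Form.Char_Poly"
begin

text \<open>Frame indices are 0..d-1: 0 is l, 1 is n, and index k (2 <= k < d)
  is the spacelike frame vector m^(k+1) of the paper.
  Frame metric (equal to its inverse): g(l,n)=1, g(m^i,m^j)=delta.\<close>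

definition frame_eta :: "nat \<Rightarrow> nat \<Rightarrow> nat \<Rightarrow> real" where
  "frame_eta d a b =
     (if (a = 0 \<and> b = 1) \<or> (a = 1 \<and> b = 0) then 1
      else if a = b \<and> 2 \<le> a \<and> a < d then 1 else 0)"

definition is_weyl :: "nat \<Rightarrow> (nat \<Rightarrow> nat \<Rightarrow> nat \<Rightarrow> nat \<Rightarrow> real) \<Rightarrow> bool" where
  "is_weyl d C \<longleftrightarrow>
     (\<forall>a<d. \<forall>b<d. \<forall>c<d. \<forall>e<d.
        C a b c e = - C b a c e \<and>
        C a b c e = - C a b e c \<and>
        C a b c e = C c e a b \<and>
        C a b c e + C a c e b + C a e b c = 0) \<and>
     (\<forall>b<d. \<forall>e<d. (\<Sum>a<d. \<Sum>c<d. frame_eta d a c * C a b c e) = 0)"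

text \<open>Lorentz transformation fixing l and n and acting by R on span of the m's:
  new frame vector a is the sum over a' of (lorentz_of d R a' a) times old frame vector a'.\<close>
definition lorentz_of :: "nat \<Rightarrow> real mat \<Rightarrow> nat \<Rightarrow> nat \<Rightarrow> real" where
  "lorentz_of d R a b =
     (if a < 2 \<or> b < 2 then (if a = b then 1 else 0) else R $$ (a - 2, b - 2))"

definition so_invariant :: "nat \<Rightarrow> (nat \<Rightarrow> nat \<Rightarrow> nat \<Rightarrow> nat \<Rightarrow> real) \<Rightarrow> bool" where
  "so_invariant d C \<longleftrightarrow>
     (\<forall>R \<in> carrier_mat (d - 2) (d - 2).
        transpose_mat R * R = 1\<^sub>m (d - 2) \<and> det R = 1 \<longrightarrow>
        (\<forall>a<d. \<forall>b<d. \<forall>c<d. \<forall>e<d.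
          (\<Sum>a'<d. \<Sum>b'<d. \<Sum>c'<d. \<Sum>e'<d.
             lorentz_of d R a' a * lorentz_of d R b' b * lorentz_of d R c' c *
             lorentz_of d R e' e * C a' b' c' e') = C a b c e))"

text \<open>Raising an index with the frame metric swaps l and n.\<close>
definition swap01 :: "nat \<Rightarrow> nat" where
  "swap01 x = (if x = 0 then 1 else if x = 1 then 0 else x)"

text \<open>Basis of bivectors: e_a wedge e_b for a < b < d.\<close>
definition bivector_pairs :: "nat \<Rightarrow> (nat \<times> nat) list" where
  "bivector_pairs d = [(a, b). b \<leftarrow> [0..<d], a \<leftarrow> [0..<b]]"

text \<open>Matrix of the Weyl operator (C F)^{mu nu} = 1/2 C^{mu nu}_{alpha beta} F^{alpha beta}
  in the basis of bivectors; entry ((mu,nu),(a,b)) is C^{mu nu}_{a b}.\<close>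
definition weyl_op_mat :: "nat \<Rightarrow> (nat \<Rightarrow> nat \<Rightarrow> nat \<Rightarrow> nat \<Rightarrow> real) \<Rightarrow> complex mat" where
  "weyl_op_mat d C =
     (let P = bivector_pairs d; N = length P in
      mat N N (\<lambda>(i, j). case P ! i of (mu, nu) \<Rightarrow> case P ! j of (a, b) \<Rightarrow>
         complex_of_real (C (swap01 mu) (swap01 nu) a b)))"

definition Rbar :: "nat \<Rightarrow> (nat \<Rightarrow> nat \<Rightarrow> nat \<Rightarrow> nat \<Rightarrow> real) \<Rightarrow> real" where
  "Rbar d C = (\<Sum>i\<in>{2..<d}. \<Sum>k\<in>{2..<d}. C k i k i)"

definition A34 :: "(nat \<Rightarrow> nat \<Rightarrow> nat \<Rightarrow> nat \<Rightarrow> real) \<Rightarrow> real" where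
  "A34 C = C 0 1 2 3"

end

theory Submission
  imports Defs
begin


definition tau :: "nat \<Rightarrow> nat \<Rightarrow> nat \<Rightarrow> nat" where
  "tau p q x = (if x = p then q else if x = q then p else x)"

lemma sum_collapse:
  fixes d t :: nat
  assumes "\<And>x. x < d \<Longrightarrow> L x = (if x = t then s else (0::real))" "t < d"
  shows "(\<Sum>x<d. L x * X x) = s * X t"
proof -
  have "(\<Sum>x<d. L x * X x) = (\<Sum>x<d. (if x = t then s * X t else 0))"
    by (rule sum.cong, auto simp: assms)
  also have "\<dots> = s * X t" using assms(2) by (subst sum.delta) auto
  finally show ?thesis .
qed

lemma inv_general:
  assumes inv: "so_invariant d C" and R: "R \<in> carrier_mat (d-2) (d-2)"
    and orth: "transpose_mat R * R = 1\<^sub>m (d-2)" and det: "det R = 1"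
    and L: "\<And>a a'. a < d \<Longrightarrow> a' < d \<Longrightarrow> lorentz_of d R a' a = (if a' = \<sigma> a then s a else 0)"
    and sig: "\<And>a. a < d \<Longrightarrow> \<sigma> a < d"
    and abce: "a < d" "b < d" "c < d" "e < d"
  shows "C a b c e = s a * s b * s c * s e * C (\<sigma> a) (\<sigma> b) (\<sigma> c) (\<sigma> e)"
proof -
  have H: "(\<Sum>a'<d. \<Sum>b'<d. \<Sum>c'<d. \<Sum>e'<d.
             lorentz_of d R a' a * lorentz_of d R b' b * lorentz_of d R c' c *
             lorentz_of d R e' e * C a' b' c' e') = C a b c e"
    using inv R orth det abce unfolding so_invariant_def by blast
  have "(\<Sum>a'<d. \<Sum>b'<d. \<Sum>c'<d. \<Sum>e'<d.
             lorentz_of d R a' a * lorentz_of d R b' b * lorentz_of d R c' c *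
             lorentz_of d R e' e * C a' b' c' e') =
        (\<Sum>a'<d. lorentz_of d R a' a * (\<Sum>b'<d. lorentz_of d R b' b * (\<Sum>c'<d. lorentz_of d R c' c *
             (\<Sum>e'<d. lorentz_of d R e' e * C a' b' c' e'))))"
    by (simp add: sum_distrib_left mult.assoc)
  also have "\<dots> = (\<Sum>a'<d. lorentz_of d R a' a * (\<Sum>b'<d. lorentz_of d R b' b * (\<Sum>c'<d. lorentz_of d R c' c *
             (s e * C a' b' c' (\<sigma> e)))))"
    by (intro sum.cong refl arg_cong2[where f="(*)"] sum_collapse, auto simp: L abce sig)
  also have "\<dots> = (\<Sum>a'<d. lorentz_of d R a' a * (\<Sum>b'<d. lorentz_of d R b' b * 
             (s c * (s e * C a' b' (\<sigma> c) (\<sigma> e)))))"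
    by (intro sum.cong refl arg_cong2[where f="(*)"] sum_collapse, auto simp: L abce sig)
  also have "\<dots> = (\<Sum>a'<d. lorentz_of d R a' a * 
             (s b * (s c * (s e * C a' (\<sigma> b) (\<sigma> c) (\<sigma> e)))))"
    by (intro sum.cong refl arg_cong2[where f="(*)"] sum_collapse, auto simp: L abce sig)
  also have "\<dots> = s a * (s b * (s c * (s e * C (\<sigma> a) (\<sigma> b) (\<sigma> c) (\<sigma> e))))"
    by (intro sum_collapse, auto simp: L abce sig)
  finally show ?thesis using H by (simp add: mult.assoc)
qed

lemma orth_signed_perm:
  fixes R :: "real mat"
  assumes R: "R \<in> carrier_mat n n"
    and E: "\<And>r c. r < n \<Longrightarrow> c < n \<Longrightarrow> R $$ (r,c) = (if r = \<sigma> c then t c else 0)"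
    and sig: "\<And>c. c < n \<Longrightarrow> \<sigma> c < n"
    and inj: "\<And>c c'. c < n \<Longrightarrow> c' < n \<Longrightarrow> \<sigma> c = \<sigma> c' \<Longrightarrow> c = c'"
    and t: "\<And>c. c < n \<Longrightarrow> t c * t c = 1"
  shows "transpose_mat R * R = 1\<^sub>m n"
proof (rule eq_matI)
  fix i j assume i: "i < dim_row (1\<^sub>m n)" and j: "j < dim_col (1\<^sub>m n)"
  hence i: "i < n" and j: "j < n" by auto
  have "(transpose_mat R * R) $$ (i,j) = (\<Sum>k<n. R $$ (k,i) * R $$ (k,j))"
    using R i j by (simp add: scalar_prod_def atLeast0LessThan)
  also have "\<dots> = t i * R $$ (\<sigma> i, j)"
    by (rule sum_collapse, auto simp: E i sig)
  also have "\<dots> = 1\<^sub>m n $$ (i,j)"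
    using i j t[OF i] by (auto simp: E sig dest: inj)
  finally show "(transpose_mat R * R) $$ (i,j) = 1\<^sub>m n $$ (i,j)" .
qed (use R in auto)


definition sw :: "nat \<Rightarrow> nat \<Rightarrow> real" where "sw q x = (if x = q then -1 else 1)"
definition fl :: "nat \<Rightarrow> nat \<Rightarrow> nat \<Rightarrow> real" where "fl p q x = (if x = p \<or> x = q then -1 else 1)"

lemma inv_swap:
  assumes inv: "so_invariant d C" and pq: "2 \<le> p" "p < d" "2 \<le> q" "q < d" "p \<noteq> q"
    and abce: "a < d" "b < d" "c < d" "e < d"
  shows "C a b c e = sw q a * sw q b * sw q c * sw q e * C (tau p q a) (tau p q b) (tau p q c) (tau p q e)"
proof -
  define n where "n = d - 2"
  define R :: "real mat" where "R = multrow (p-2) (-1) (swaprows (p-2) (q-2) (1\<^sub>m n))"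
  have R: "R \<in> carrier_mat n n" unfolding R_def by auto
  have E: "R $$ (r,c) = (if r = tau (p-2) (q-2) c then (if c = q-2 then -1 else 1) else 0)"
    if "r < n" "c < n" for r c
    using that pq unfolding R_def tau_def by (auto simp: n_def)
  have det: "det R = 1" unfolding R_def
    using pq by (subst det_multrow[of _ n], auto simp: n_def det_swaprows[of _ n])
  have orth: "transpose_mat R * R = 1\<^sub>m n"
    by (rule orth_signed_perm[OF R E],
        insert pq, auto simp: n_def tau_def split: if_splits)
  have L: "lorentz_of d R a' a = (if a' = tau p q a then sw q a else 0)" if "a < d" "a' < d" for a a'
    using that pq unfolding lorentz_of_def sw_def
    by (auto simp: E n_def tau_def)
  show ?thesis
    by (rule inv_general[OF inv R[unfolded n_def] orth[unfolded n_def] det L], insert pq abce,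
        auto simp: tau_def)
qed

lemma inv_flip:
  assumes inv: "so_invariant d C" and pq: "2 \<le> p" "p < d" "2 \<le> q" "q < d" "p \<noteq> q"
    and abce: "a < d" "b < d" "c < d" "e < d"
  shows "C a b c e = fl p q a * fl p q b * fl p q c * fl p q e * C a b c e"
proof -
  define n where "n = d - 2"
  define R :: "real mat" where "R = multrow (p-2) (-1) (multrow (q-2) (-1) (1\<^sub>m n))"
  have R: "R \<in> carrier_mat n n" unfolding R_def by auto
  have E: "R $$ (r,c) = (if r = id c then (if c = p-2 \<or> c = q-2 then -1 else 1) else 0)"
    if "r < n" "c < n" for r c
    using that pq unfolding R_def by (auto simp: n_def)
  have det: "det R = 1" unfolding R_def
    using pq by (subst det_multrow[of _ n], auto simp: n_def det_multrow[of _ n])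
  have orth: "transpose_mat R * R = 1\<^sub>m n"
    by (rule orth_signed_perm[OF R E],
        insert pq, auto simp: n_def split: if_splits)
  have L: "lorentz_of d R a' a = (if a' = id a then fl p q a else 0)" if "a < d" "a' < d" for a a'
    using that pq unfolding lorentz_of_def fl_def
    by (auto simp: E n_def)
  show ?thesis
    using inv_general[OF inv R[unfolded n_def] orth[unfolded n_def] det L] pq abce
    by auto
qed


locale wctx =
  fixes d :: nat and C :: "nat \<Rightarrow> nat \<Rightarrow> nat \<Rightarrow> nat \<Rightarrow> real"
  assumes W: "is_weyl d C" and I: "so_invariant d C" and d4: "4 \<le> d"
begin

lemma A1: "a < d \<Longrightarrow> b < d \<Longrightarrow> c < d \<Longrightarrow> e < d \<Longrightarrow> C a b c e = - C b a c e"
  using W unfolding is_weyl_def by blast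
lemma A2: "a < d \<Longrightarrow> b < d \<Longrightarrow> c < d \<Longrightarrow> e < d \<Longrightarrow> C a b c e = - C a b e c"
  using W unfolding is_weyl_def by blast
lemma PS: "a < d \<Longrightarrow> b < d \<Longrightarrow> c < d \<Longrightarrow> e < d \<Longrightarrow> C a b c e = C c e a b"
  using W unfolding is_weyl_def by blast
lemma BI: "a < d \<Longrightarrow> b < d \<Longrightarrow> c < d \<Longrightarrow> e < d \<Longrightarrow> C a b c e + C a c e b + C a e b c = 0"
  using W unfolding is_weyl_def by blast
lemma TR: "b < d \<Longrightarrow> e < d \<Longrightarrow> (\<Sum>a<d. \<Sum>c<d. frame_eta d a c * C a b c e) = 0"
  using W unfolding is_weyl_def by blast

lemma Z1: "a < d \<Longrightarrow> c < d \<Longrightarrow> e < d \<Longrightarrow> C a a c e = 0"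
  using A1[of a a c e] by simp
lemma Z2: "a < d \<Longrightarrow> b < d \<Longrightarrow> c < d \<Longrightarrow> C a b c c = 0"
  using A2[of a b c c] by simp

lemma trace_split:
  fixes X :: "nat \<Rightarrow> nat \<Rightarrow> real"
  shows "(\<Sum>a<d. \<Sum>c<d. frame_eta d a c * X a c) = X 0 1 + X 1 0 + (\<Sum>k\<in>{2..<d}. X k k)"
proof -
  have inner: "(\<Sum>c<d. frame_eta d a c * X a c) = (if a = 0 then X 0 1 else if a = 1 then X 1 0 else X a a)"
    if "a < d" for a
  proof -
    have "(\<Sum>c<d. frame_eta d a c * X a c) =
          (\<Sum>c<d. if c = (if a = 0 then 1 else if a = 1 then 0 else a) then X a c else 0)"
      by (rule sum.cong, insert that, auto simp: frame_eta_def)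
    also have "\<dots> = (if a = 0 then X 0 1 else if a = 1 then X 1 0 else X a a)"
      using that d4 by (subst sum.delta, auto)
    finally show ?thesis .
  qed
  have "(\<Sum>a<d. \<Sum>c<d. frame_eta d a c * X a c) =
        (\<Sum>a<d. (if a = 0 then X 0 1 else if a = 1 then X 1 0 else X a a))"
    by (rule sum.cong, auto simp: inner)
  moreover have eqs: "{..<d} = {0,1} \<union> {2..<d}" using d4 by auto
  have "(\<Sum>a<d. (if a = 0 then X 0 1 else if a = 1 then X 1 0 else X a a))
      = X 0 1 + X 1 0 + (\<Sum>k\<in>{2..<d}. X k k)"
    apply (subst eqs)
    by (subst sum.union_disjoint, auto intro!: sum.cong)
  ultimately show ?thesis by simp
qed

lemma TR': "b < d \<Longrightarrow> e < d \<Longrightarrow> C 0 b 1 e + C 1 b 0 e + (\<Sum>k\<in>{2..<d}. C k b k e) = 0"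
  using TR[of b e] trace_split[of "\<lambda>a c. C a b c e"] by simp

lemma flip_zero:
  assumes "2 \<le> p" "p < d" "2 \<le> q" "q < d" "p \<noteq> q" "a < d" "b < d" "c < d" "e < d"
    and "fl p q a * fl p q b * fl p q c * fl p q e = -1"
  shows "C a b c e = 0"
  using inv_flip[OF I assms(1-9)] assms(10) by simp

lemma swap_eq: "2 \<le> p \<Longrightarrow> p < d \<Longrightarrow> 2 \<le> q \<Longrightarrow> q < d \<Longrightarrow> p \<noteq> q \<Longrightarrow>
   a < d \<Longrightarrow> b < d \<Longrightarrow> c < d \<Longrightarrow> e < d \<Longrightarrow>
   C a b c e = sw q a * sw q b * sw q c * sw q e * C (tau p q a) (tau p q b) (tau p q c) (tau p q e)"
  by (rule inv_swap[OF I])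

lemma swap_sq: "2 \<le> p \<Longrightarrow> p < d \<Longrightarrow> 2 \<le> q \<Longrightarrow> q < d \<Longrightarrow> p \<noteq> q \<Longrightarrow>
   a < d \<Longrightarrow> b < d \<Longrightarrow> 
   C a b a b = C (tau p q a) (tau p q b) (tau p q a) (tau p q b)"
  using swap_eq[of p q a b a b] by (simp add: sw_def)

lemma tau_lt: "p < d \<Longrightarrow> q < d \<Longrightarrow> x < d \<Longrightarrow> tau p q x < d" by (simp add: tau_def)
lemma tau_ge: "2 \<le> p \<Longrightarrow> 2 \<le> q \<Longrightarrow> 2 \<le> x \<Longrightarrow> 2 \<le> tau p q x" by (simp add: tau_def)
lemma tau_small: "2 \<le> p \<Longrightarrow> 2 \<le> q \<Longrightarrow> x < 2 \<Longrightarrow> tau p q x = x" by (simp add: tau_def)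

lemma to2: assumes a: "2 \<le> i" "i < d" "x < 2" "y < 2" shows "C x i y i = C x 2 y 2"
proof (cases "i = 2")
  case False
  have "C x i y i = sw 2 x * sw 2 i * sw 2 y * sw 2 i * C (tau i 2 x) (tau i 2 i) (tau i 2 y) (tau i 2 i)"
    by (rule swap_eq, insert a False d4, auto)
  then show ?thesis using a False by (simp add: tau_def sw_def)
qed simp

lemma to23base: assumes j: "2 \<le> j" "j < d" "j \<noteq> 2" "j \<noteq> 3" shows "C 2 j 2 j = C 2 3 2 3"
proof -
  have "C 2 j 2 j = sw 3 2 * sw 3 j * sw 3 2 * sw 3 j * C (tau j 3 2) (tau j 3 j) (tau j 3 2) (tau j 3 j)"
    by (rule swap_eq, insert j d4, auto)
  moreover have "sw 3 2 = 1" "sw 3 j = 1" by (auto simp: sw_def j)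
  moreover have "tau j 3 2 = 2" "tau j 3 j = 3" by (auto simp: tau_def j)
  ultimately show ?thesis by simp
qed

lemma to23: assumes a: "2 \<le> i" "i < d" "2 \<le> j" "j < d" "i \<noteq> j"
  shows "C i j i j = C 2 3 2 3"
proof -
  have b2: "C 2 j 2 j = C 2 3 2 3" if "2 \<le> j" "j < d" "j \<noteq> 2" for j
    using to23base[of j] that by (cases "j = 3") auto
  show ?thesis
  proof (cases "i = 2")
    case True then show ?thesis using b2[of j] a by simp
  next
    case False
    have "C i j i j = sw 2 i * sw 2 j * sw 2 i * sw 2 j * C (tau i 2 i) (tau i 2 j) (tau i 2 i) (tau i 2 j)"
      by (rule swap_eq, insert a False d4, auto)
    moreover have "sw 2 i * sw 2 j * sw 2 i * sw 2 j = 1" by (auto simp: sw_def)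
    moreover have "tau i 2 i = 2" by (simp add: tau_def)
    moreover have "2 \<le> tau i 2 j" "tau i 2 j < d" "tau i 2 j \<noteq> 2" using a False by (auto simp: tau_def)
    ultimately show ?thesis using b2[of "tau i 2 j"] by simp
  qed
qed

lemma flipk: "k < d \<Longrightarrow> x < d \<Longrightarrow> y < d \<Longrightarrow> C k x k y = C x k y k"
  using A1[of k x k y] A2[of x k k y] by simp

lemma sum_minus_one:
  fixes w :: real
  assumes "finite S" "i \<in> S"
  shows "(\<Sum>k\<in>S. if k = i then 0 else w) = (real (card S) - 1) * w"
proof -
  have "(\<Sum>k\<in>S. if k = i then 0 else w) = (\<Sum>k\<in>S. w) - (\<Sum>k\<in>S. if k = i then w else 0)"
    by (subst sum_subtractf[symmetric], rule sum.cong, auto)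
  also have "\<dots> = real (card S) * w - w" using assms by (simp add: sum.delta)
  finally show ?thesis by (simp add: algebra_simps)
qed

lemma T0gen: assumes x: "x < 2" and i: "2 \<le> i" "i < d" shows "C x i x i = 0"
proof -
  have "C 0 x 1 x + C 1 x 0 x + (\<Sum>k\<in>{2..<d}. C k x k x) = 0" using TR'[of x x] x d4 by simp
  moreover have "C 0 x 1 x + C 1 x 0 x = 0" using x Z1[of 0 1 0] Z2[of 1 0 0] Z2[of 0 1 1] Z1[of 1 0 1] d4
    by (cases "x = 0", auto simp: less_2_cases_iff)
  moreover have "(\<Sum>k\<in>{2..<d}. C k x k x) = (\<Sum>k\<in>{2..<d}. C x 2 x 2)"
  proof (rule sum.cong[OF refl])
    fix k assume k: "k \<in> {2..<d}"
    show "C k x k x = C x 2 x 2" using flipk[of k x x] to2[of k x x] k x d4 by simp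
  qed
  ultimately have "real (d - 2) * C x 2 x 2 = 0" by simp
  hence "C x 2 x 2 = 0" using d4 by simp
  then show ?thesis using to2[OF i x x] by simp
qed

definition "uu = C 0 2 1 2"
definition "ww = C 2 3 2 3"

lemma U: "2 \<le> i \<Longrightarrow> i < d \<Longrightarrow> C 0 i 1 i = uu"
  unfolding uu_def by (rule to2, auto)
lemma W': "2 \<le> i \<Longrightarrow> i < d \<Longrightarrow> 2 \<le> j \<Longrightarrow> j < d \<Longrightarrow> i \<noteq> j \<Longrightarrow> C i j i j = ww"
  unfolding ww_def by (rule to23)

lemma TrA: "C 1 0 0 1 = - real (d - 2) * uu"
proof -
  have "C 0 0 1 1 + C 1 0 0 1 + (\<Sum>k\<in>{2..<d}. C k 0 k 1) = 0" using TR'[of 0 1] d4 by simp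
  moreover have "C 0 0 1 1 = 0" using Z1[of 0 1 1] d4 by simp
  moreover have "(\<Sum>k\<in>{2..<d}. C k 0 k 1) = (\<Sum>k\<in>{2..<d}. uu)"
  proof (rule sum.cong[OF refl])
    fix k assume k: "k \<in> {2..<d}"
    show "C k 0 k 1 = uu" using flipk[of k 0 1] U[of k] k d4 by simp
  qed
  ultimately show ?thesis by simp
qed

lemma TrB: "2 * uu + (real d - 3) * ww = 0"
proof -
  have "C 0 2 1 2 + C 1 2 0 2 + (\<Sum>k\<in>{2..<d}. C k 2 k 2) = 0" using TR'[of 2 2] d4 by simp
  moreover have "C 1 2 0 2 = uu" using PS[of 1 2 0 2] d4 by (simp add: uu_def)
  moreover have "(\<Sum>k\<in>{2..<d}. C k 2 k 2) = (\<Sum>k\<in>{2..<d}. if k = 2 then 0 else ww)"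
    by (rule sum.cong, insert d4, auto simp: W' Z1)
  moreover have "(\<Sum>k\<in>{2..<d}. if k = 2 then 0 else ww) = (real d - 3) * ww"
    using d4 by (subst sum_minus_one, auto simp: of_nat_diff)
  ultimately show ?thesis by (simp add: uu_def)
qed

lemma RbarW: "Rbar d C = real (d-2) * (real d - 3) * ww"
proof -
  have "Rbar d C = (\<Sum>i\<in>{2..<d}. (real d - 3) * ww)"
    unfolding Rbar_def
  proof (rule sum.cong[OF refl])
    fix i assume i: "i \<in> {2..<d}"
    have "(\<Sum>k\<in>{2..<d}. C k i k i) = (\<Sum>k\<in>{2..<d}. if k = i then 0 else ww)"
      by (rule sum.cong, insert i, auto simp: W' Z1)
    also have "\<dots> = (real d - 3) * ww"
      using d4 i by (subst sum_minus_one, auto simp: of_nat_diff)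
    finally show "(\<Sum>k\<in>{2..<d}. C k i k i) = (real d - 3) * ww" .
  qed
  then show ?thesis by simp
qed

lemma S1: assumes x: "x < 2" and ijk: "2 \<le> i" "i < d" "2 \<le> j" "j < d" "2 \<le> k" "k < d"
  "i \<noteq> j" "i \<noteq> k" "j \<noteq> k" shows "C x i j k = 0"
proof -
  have x': "x < d" using x d4 by simp
  have e1: "C x i j k = sw j x * sw j i * sw j j * sw j k * C (tau i j x) (tau i j i) (tau i j j) (tau i j k)"
    by (rule swap_eq, insert x' ijk, auto)
  have e1': "C x i j k = - C x j i k" using e1 x ijk by (simp add: sw_def tau_def)
  have e2: "C x i j k = sw k x * sw k i * sw k j * sw k k * C (tau i k x) (tau i k i) (tau i k j) (tau i k k)"
    by (rule swap_eq, insert x' ijk, auto)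
  have e2': "C x i j k = - C x k j i" using e2 x ijk by (simp add: sw_def tau_def)
  have b: "C x i j k + C x j k i + C x k i j = 0" by (rule BI, insert x' ijk, auto)
  have "C x j k i = - C x j i k" by (rule A2, insert x' ijk, auto)
  moreover have "C x k i j = - C x k j i" by (rule A2, insert x' ijk, auto)
  ultimately show ?thesis using b e1' e2' by simp
qed

lemma S2: assumes ijk: "2 \<le> i" "i < d" "2 \<le> j" "j < d" "2 \<le> k" "k < d" "2 \<le> l" "l < d"
  "i \<noteq> j" "i \<noteq> k" "j \<noteq> k" "i \<noteq> l" "j \<noteq> l" "k \<noteq> l" shows "C i j k l = 0"
proof -
  have e1: "C i j k l = sw k i * sw k j * sw k k * sw k l * C (tau j k i) (tau j k j) (tau j k k) (tau j k l)"
    by (rule swap_eq, insert ijk, auto)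
  have e1': "C i j k l = - C i k j l" using e1 ijk by (simp add: sw_def tau_def)
  have e2: "C i j k l = sw l i * sw l j * sw l k * sw l l * C (tau j l i) (tau j l j) (tau j l k) (tau j l l)"
    by (rule swap_eq, insert ijk, auto)
  have e2': "C i j k l = - C i l k j" using e2 ijk by (simp add: sw_def tau_def)
  have b: "C i j k l + C i k l j + C i l j k = 0" by (rule BI, insert ijk, auto)
  have "C i k l j = - C i k j l" by (rule A2, insert ijk, auto)
  moreover have "C i l j k = - C i l k j" by (rule A2, insert ijk, auto)
  ultimately show ?thesis using b e1' e2' by simp
qed

end

context wctx begin

lemma fresh: assumes "5 \<le> d" obtains m where "2 \<le> m" "m < d" "m \<noteq> i" "m \<noteq> j"
proof (cases "2 \<noteq> i \<and> 2 \<noteq> j")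
  case True then show ?thesis using that[of 2] assms by simp
next
  case F: False
  show ?thesis
  proof (cases "3 \<noteq> i \<and> 3 \<noteq> j")
    case True then show ?thesis using that[of 3] assms by simp
  next
    case False then show ?thesis using F that[of 4] assms by auto
  qed
qed

lemma fz: "2 \<le> p \<Longrightarrow> p < d \<Longrightarrow> 2 \<le> q \<Longrightarrow> q < d \<Longrightarrow> p \<noteq> q \<Longrightarrow> a < d \<Longrightarrow> b < d \<Longrightarrow> c < d \<Longrightarrow> e < d \<Longrightarrow>
   fl p q a * fl p q b * fl p q c * fl p q e = -1 \<Longrightarrow> C a b c e = 0"
  by (rule flip_zero)

lemma offdiag: assumes d5: "5 \<le> d" and mn: "m1 < m2" "m2 < d" and ab: "a < b" "b < d"
  and ne: "(m1,m2) \<noteq> (a,b)" shows "C (swap01 m1) (swap01 m2) a b = 0"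
proof -
  consider (R1) "m1 = 0" "m2 = 1" | (R2) "m1 < 2" "2 \<le> m2" | (R3) "2 \<le> m1" using mn by linarith
  then show ?thesis
  proof cases
    case R1
    hence X: "swap01 m1 = 1" "swap01 m2 = 0" by (auto simp: swap01_def)
    consider (K2) "a < 2" "2 \<le> b" | (K3) "2 \<le> a" using ne R1 ab by (cases "2 \<le> a") auto
    then show ?thesis
    proof cases
      case K2
      obtain m where m: "2 \<le> m" "m < d" "m \<noteq> b" "m \<noteq> b" using fresh[OF d5] by blast
      show ?thesis unfolding X by (rule fz[of b m], insert m K2 ab d5, auto simp: fl_def)
    next
      case K3
      obtain m where m: "2 \<le> m" "m < d" "m \<noteq> a" "m \<noteq> b" using fresh[OF d5] by blast
      show ?thesis unfolding X by (rule fz[of a m], insert m K3 ab d5, auto simp: fl_def)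
    qed
  next
    case R2
    define X where "X = swap01 m1"
    have X: "X < 2" "swap01 m2 = m2" "X \<noteq> m1" using R2 by (auto simp: X_def swap01_def)
    consider (K1) "a = 0" "b = 1" | (K2) "a < 2" "2 \<le> b" | (K3) "2 \<le> a" using ab by linarith
    then show ?thesis
    proof cases
      case K1
      obtain m where m: "2 \<le> m" "m < d" "m \<noteq> m2" "m \<noteq> m2" using fresh[OF d5] by blast
      show ?thesis unfolding X_def[symmetric] X(2) by (rule fz[of m2 m], insert m K1 R2 X mn d5, auto simp: fl_def)
    next
      case K2
      show ?thesis
      proof (cases "b = m2")
        case True
        hence "a = X" using ne K2 X R2 by auto
        then show ?thesis unfolding X_def[symmetric] X(2) using T0gen[of X m2] X mn True R2 by simp
      next
        case False
        obtain m where m: "2 \<le> m" "m < d" "m \<noteq> m2" "m \<noteq> b" using fresh[OF d5] by blast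
        show ?thesis unfolding X_def[symmetric] X(2)
          by (rule fz[of m2 m], insert m K2 R2 X mn ab False d5, auto simp: fl_def)
      qed
    next
      case K3
      show ?thesis
      proof (cases "m2 = a")
        case True
        show ?thesis unfolding X_def[symmetric] X(2)
          by (rule fz[of b m2], insert K3 R2 X mn ab True d5, auto simp: fl_def)
      next
        case F1: False
        show ?thesis
        proof (cases "m2 = b")
          case True
          show ?thesis unfolding X_def[symmetric] X(2)
            by (rule fz[of a m2], insert K3 R2 X mn ab True d5, auto simp: fl_def)
        next
          case False
          show ?thesis unfolding X_def[symmetric] X(2)
            by (rule S1, insert K3 R2 X mn ab False F1 d5, auto)
        qed
      qed
    qed
  next
    case R3
    have X: "swap01 m1 = m1" "swap01 m2 = m2" using R3 mn by (auto simp: swap01_def)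
    consider (K1) "a = 0" "b = 1" | (K2) "a < 2" "2 \<le> b" | (K3) "2 \<le> a" using ab by linarith
    then show ?thesis
    proof cases
      case K1
      obtain m where m: "2 \<le> m" "m < d" "m \<noteq> m1" "m \<noteq> m2" using fresh[OF d5] by blast
      show ?thesis unfolding X by (rule fz[of m1 m], insert m K1 R3 mn d5, auto simp: fl_def)
    next
      case K2
      consider "b = m1" | "b = m2" | "b \<noteq> m1" "b \<noteq> m2" by blast
      then show ?thesis
      proof cases
        case 1
        show ?thesis unfolding X by (rule fz[of m1 m2], insert 1 K2 R3 mn ab d5, auto simp: fl_def)
      next
        case 2
        show ?thesis unfolding X by (rule fz[of m1 m2], insert 2 K2 R3 mn ab d5, auto simp: fl_def)
      next
        case 3
        have "C m1 m2 a b = C a b m1 m2" by (rule PS, insert mn ab, auto)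
        also have "\<dots> = 0" by (rule S1, insert 3 K2 R3 mn ab, auto)
        finally show ?thesis unfolding X .
      qed
    next
      case K3
      consider "a = m1" | "a = m2" | "b = m1" | "b = m2" "a \<noteq> m1"
        | "a \<noteq> m1" "a \<noteq> m2" "b \<noteq> m1" "b \<noteq> m2" by blast
      then show ?thesis
      proof cases
        case 1
        hence "b \<noteq> m2" using ne by auto
        then show ?thesis unfolding X by (rule_tac fz[of m2 m1], insert 1 K3 R3 mn ab d5, auto simp: fl_def)
      next
        case 2
        then show ?thesis unfolding X by (rule_tac fz[of m1 m2], insert 2 K3 R3 mn ab d5, auto simp: fl_def)
      next
        case 3
        then show ?thesis unfolding X by (rule_tac fz[of m2 m1], insert 3 K3 R3 mn ab d5, auto simp: fl_def)
      next
        case 4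
        then show ?thesis unfolding X by (rule_tac fz[of m1 m2], insert 4 K3 R3 mn ab d5, auto simp: fl_def)
      next
        case 5
        then show ?thesis unfolding X by (rule_tac S2, insert 5 K3 R3 mn ab d5, auto)
      qed
    qed
  qed
qed

end


lemma bp_Suc: "bivector_pairs (Suc m) = bivector_pairs m @ map (\<lambda>a. (a, m)) [0..<m]"
  by (simp add: bivector_pairs_def)

lemma bp_0: "bivector_pairs 0 = []" by (simp add: bivector_pairs_def)

lemma bp_set: "set (bivector_pairs d) = {(a,b). a < b \<and> b < d}"
  by (induct d) (auto simp: bp_0 bp_Suc less_Suc_eq)

lemma bp_distinct: "distinct (bivector_pairs d)"
  by (induct d) (auto simp: bp_0 bp_Suc distinct_map inj_on_def bp_set)


lemma prod_const_upt: "prod_list (map (\<lambda>a. f a) [k..<m]) = (y::'a::comm_monoid_mult) ^ (m - k)"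
  if "\<And>a. k \<le> a \<Longrightarrow> a < m \<Longrightarrow> f a = y"
  using that
proof (induct m)
  case (Suc m) then show ?case by (cases "k \<le> m") (auto simp: Suc_diff_le mult.commute)
qed simp

lemma prod_bp:
  fixes x y z :: "'a::comm_monoid_mult"
  assumes g: "\<And>a b. g (a,b) = (if a = 0 \<and> b = 1 then z else if a < 2 then x else y)"
    and m: "2 \<le> m"
  shows "prod_list (map g (bivector_pairs m)) = z * x ^ (2 * (m - 2)) * y ^ ((m - 2) * (m - 3) div 2)"
  using m
proof (induct m)
  case 0 then show ?case by simp
next
  case (Suc m)
  show ?case
  proof (cases "m = 1")
    case True
    then show ?thesis by (simp add: bivector_pairs_def g)
  next
    case False
    hence m2: "2 \<le> m" using Suc by simp
    have IH: "prod_list (map g (bivector_pairs m)) = z * x ^ (2 * (m - 2)) * y ^ ((m - 2) * (m - 3) div 2)"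
      using Suc m2 by simp
    have up: "[0..<m] = [0,1] @ [2..<m]" using m2 
      using upt_conv_Cons[of 0 m] upt_conv_Cons[of 1 m] by (simp add: numeral_2_eq_2)
    have new: "prod_list (map g (map (\<lambda>a. (a, m)) [0..<m])) = x * x * y ^ (m - 2)"
      unfolding up using m2 by (simp add: g prod_const_upt[where y = y] o_def mult.assoc)
    have ex: "(Suc m - 2) * (Suc m - 3) div 2 = (m - 2) * (m - 3) div 2 + (m - 2)"
    proof -
      have "(Suc m - 2) * (Suc m - 3) = (m - 2) * (m - 3) + 2 * (m - 2)"
      proof -
        obtain k where k: "m = k + 2" using m2 le_Suc_ex by (metis add.commute)
        have "(k+1)*k = k*(k-1) + 2*k" by (cases k) auto
        then show ?thesis using k by (simp add: numeral_3_eq_3 numeral_2_eq_2)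
      qed
      then show ?thesis by simp
    qed
    have ex2: "2 * (Suc m - 2) = 2 * (m - 2) + 2" using m2 by simp
    show ?thesis unfolding bp_Suc prod_list.append map_append IH new ex ex2 power_add
      by (simp add: mult_ac power2_eq_square)
  qed
qed


context wctx begin

lemma diag_real:
  "C 1 0 0 1 = Rbar d C / 2"
  "uu = - Rbar d C / (2 * real (d-2))"
  "ww = Rbar d C / (real (d-2) * (real (d-2) - 1))"
proof -
  have n: "real (d - 2) = real d - 2" using d4 by (simp add: of_nat_diff)
  have r: "Rbar d C = (real d - 2) * (real d - 3) * ww" using RbarW n by simp
  have u: "uu = - (real d - 3) * ww / 2" using TrB by (simp add: field_simps)
  have d3: "real d - 3 \<noteq> 0" "real d - 2 \<noteq> 0" using d4 by auto
  show "C 1 0 0 1 = Rbar d C / 2" using TrA n r u by (simp add: field_simps)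
  have e: "Rbar d C = - 2 * (real d - 2) * uu" by (simp add: r u field_simps)
  show "uu = - Rbar d C / (2 * real (d-2))" using n e d3 by (simp add: field_simps)
  have e3: "Rbar d C = (real (d-2) * (real (d-2) - 1)) * ww" using r n by (simp add: algebra_simps)
  have nz: "real (d-2) * (real (d-2) - 1) \<noteq> 0" using d3 n by simp
  show "ww = Rbar d C / (real (d-2) * (real (d-2) - 1))" unfolding e3 using nz d4 by simp
qed

lemma wom_carrier: "weyl_op_mat d C \<in> carrier_mat (length (bivector_pairs d)) (length (bivector_pairs d))"
  by (simp add: weyl_op_mat_def Let_def)

lemma wom_entry: "i < length (bivector_pairs d) \<Longrightarrow> j < length (bivector_pairs d) \<Longrightarrow>
  weyl_op_mat d C $$ (i,j) = complex_of_real (C (swap01 (fst (bivector_pairs d ! i))) (swap01 (snd (bivector_pairs d ! i)))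
     (fst (bivector_pairs d ! j)) (snd (bivector_pairs d ! j)))"
  by (simp add: weyl_op_mat_def Let_def split: prod.split)

lemma bp_nth: "i < length (bivector_pairs d) \<Longrightarrow> fst (bivector_pairs d ! i) < snd (bivector_pairs d ! i)
   \<and> snd (bivector_pairs d ! i) < d"
proof -
  assume "i < length (bivector_pairs d)"
  hence "bivector_pairs d ! i \<in> set (bivector_pairs d)" by simp
  then show ?thesis unfolding bp_set by auto
qed

lemma big_case: assumes d5: "5 \<le> d"
  shows "char_poly (weyl_op_mat d C) =
     [:-(-(1 / (2 * (of_nat (d - 2) :: complex))) * complex_of_real (Rbar d C)), 1:] ^ (2 * (d - 2)) *
     [:-((1/2) * complex_of_real (Rbar d C)), 1:] *
     [:-((1 / ((of_nat (d - 2) :: complex) * (of_nat (d - 2) - 1))) * complex_of_real (Rbar d C)), 1:] ^ ((d - 2) * (d - 3) div 2)"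
proof -
  define P where "P = bivector_pairs d"
  define A where "A = weyl_op_mat d C"
  define N where "N = length P"
  have A: "A \<in> carrier_mat N N" using wom_carrier unfolding A_def N_def P_def .
  have ut: "upper_triangular A"
    unfolding upper_triangular_def
  proof (intro allI impI)
    fix i j assume i: "i < dim_row A" and j: "j < i"
    hence i: "i < N" and j': "j < N" using A by auto
    have ne: "P ! i \<noteq> P ! j" using bp_distinct[of d] i j' j unfolding P_def N_def
      by (simp add: nth_eq_iff_index_eq)
    show "A $$ (i,j) = 0"
      unfolding A_def using wom_entry[of i j] i j' bp_nth[of i] bp_nth[of j] ne
        offdiag[OF d5, of "fst (P ! i)" "snd (P ! i)" "fst (P ! j)" "snd (P ! j)"]
      unfolding P_def N_def by (simp add: prod_eq_iff)
  qed
  define G where "G = (\<lambda>p. case p of (a, b) \<Rightarrow> complex_of_real (C (swap01 a) (swap01 b) a b))"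
  have diag: "diag_mat A = map G P"
  proof -
    have "diag_mat A = map (\<lambda>i. G (P ! i)) [0..<N]"
      unfolding diag_mat_def using A
      by (intro map_cong, auto simp: A_def wom_entry G_def P_def N_def split: prod.split)
    also have "\<dots> = map G (map ((!) P) [0..<length P])" by (simp add: N_def)
    also have "\<dots> = map G P" by (simp add: map_nth)
    finally show ?thesis .
  qed
  define R where "R = complex_of_real (Rbar d C)"
  define D where "D = (of_nat (d - 2) :: complex)"
  define x where "x = [:-(-(1 / (2 * D)) * R), 1:]"
  define z where "z = [:-((1/2) * R), 1:]"
  define y where "y = [:-((1 / (D * (D - 1))) * R), 1:]"
  define g where "g = (\<lambda>(a::nat,b::nat). if a = 0 \<and> b = 1 then z else if a < 2 then x else y)"
  have cp: "char_poly A = prod_list (map (\<lambda>a. [:-a, 1:]) (diag_mat A))"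
    by (rule char_poly_upper_triangular[OF A ut])
  have "map (\<lambda>a. [:-a, 1:]) (diag_mat A) = map g P"
    unfolding diag map_map
  proof (rule map_cong[OF refl])
    fix p assume "p \<in> set P"
    then obtain a b where p: "p = (a,b)" "a < b" "b < d" unfolding P_def bp_set by auto
    have Dr: "D = complex_of_real (real (d-2))" unfolding D_def by simp
    have hc1: "complex_of_real (C 1 0 0 1) = (1/2) * R" unfolding R_def diag_real(1) by simp
    have hc2: "complex_of_real uu = -(1 / (2 * D)) * R" unfolding R_def diag_real(2) Dr by simp
    have hc3: "complex_of_real ww = (1 / (D * (D - 1))) * R" unfolding R_def diag_real(3) Dr by simp
    show "((\<lambda>a. [:-a, 1:]) \<circ> G) p = g p"
    proof (cases "a = 0 \<and> b = 1")
      case True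
      then show ?thesis using p hc1 by (simp add: G_def g_def z_def swap01_def)
    next
      case F: False
      show ?thesis
      proof (cases "a < 2")
        case True
        hence b2: "2 \<le> b" using F p by auto
        have "C (swap01 a) (swap01 b) a b = uu"
        proof (cases "a = 0")
          case True
          then show ?thesis using b2 p U[of b] PS[of 1 b 0 b] by (simp add: swap01_def)
        next
          case False
          then have "a = 1" using \<open>a < 2\<close> by simp
          then show ?thesis using b2 p U[of b] by (simp add: swap01_def)
        qed
        then show ?thesis using p True F hc2
          by (auto simp: G_def g_def x_def)
      next
        case False
        have "C (swap01 a) (swap01 b) a b = ww" using False p W'[of a b] by (simp add: swap01_def)
        then show ?thesis using p False F hc3
          by (auto simp: G_def g_def y_def)
      qed
    qed
  qed
  hence "char_poly A = prod_list (map g P)" using cp by simp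
  also have "\<dots> = z * x ^ (2 * (d - 2)) * y ^ ((d - 2) * (d - 3) div 2)"
    unfolding P_def by (rule prod_bp, auto simp: g_def, insert d5, simp)
  finally show ?thesis unfolding A_def x_def y_def z_def R_def D_def by (simp add: mult_ac)
qed

end


definition mk :: "complex list list \<Rightarrow> complex mat" where
  "mk L = mat 6 6 (\<lambda>(i,j). L ! i ! j)"

lemma mk_carrier[simp]: "mk L \<in> carrier_mat 6 6" by (simp add: mk_def)
lemma mk_dim[simp]: "dim_row (mk L) = 6" "dim_col (mk L) = 6" by (simp_all add: mk_def)
lemma mk_index[simp]: "i < 6 \<Longrightarrow> j < 6 \<Longrightarrow> mk L $$ (i,j) = L ! i ! j" by (simp add: mk_def)

lemma less6: "(i::nat) < 6 \<longleftrightarrow> i = 0 \<or> i = 1 \<or> i = 2 \<or> i = 3 \<or> i = 4 \<or> i = 5" by auto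

lemma sum6: "(\<Sum>k::nat\<in>{0..<6}. f k) = f 0 + f 1 + f 2 + f 3 + f 4 + (f 5 :: 'a::comm_monoid_add)"
  by (simp add: atLeast0LessThan numeral_eq_Suc lessThan_Suc add_ac)

lemma mk_mult: "mk X * mk Y = mat 6 6 (\<lambda>(i,j). \<Sum>k\<in>{0..<6}. X ! i ! k * Y ! k ! j)"
  by (rule eq_matI, auto simp: scalar_prod_def)

lemma bp4: "bivector_pairs 4 = [(0,1),(0,2),(1,2),(0,3),(1,3),(2,3)]"
  by (simp add: bivector_pairs_def eval_nat_numeral)

context wctx begin

lemma four_case: assumes d: "d = 4"
  shows "char_poly (weyl_op_mat d C) =
     (let R = complex_of_real (Rbar d C); A = complex_of_real (A34 C) in
               [:-(-(1/4) * (R + 2 * \<i> * A)), 1:] ^ 2 *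
               [:-(-(1/4) * (R - 2 * \<i> * A)), 1:] ^ 2 *
               [:-((1/2) * (R + 2 * \<i> * A)), 1:] *
               [:-((1/2) * (R - 2 * \<i> * A)), 1:])"
proof -
  define w where "w = ww"
  define u where "u = uu"
  define g where "g = C 0 1 2 3"
  have uw: "u = - w / 2" using TrB d unfolding u_def w_def by simp
  have R: "Rbar d C = 2 * w" using RbarW d unfolding w_def by simp
    have z0: "C 1 0 0 2 = 0" by (rule fz[of 2 3], simp_all add: fl_def d)
  have z1: "C 1 0 1 2 = 0" by (rule fz[of 2 3], simp_all add: fl_def d)
  have z2: "C 1 0 0 3 = 0" by (rule fz[of 2 3], simp_all add: fl_def d)
  have z3: "C 1 0 1 3 = 0" by (rule fz[of 2 3], simp_all add: fl_def d)
  have z4: "C 1 2 0 1 = 0" by (rule fz[of 2 3], simp_all add: fl_def d)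
  have z5: "C 1 2 2 3 = 0" by (rule fz[of 2 3], simp_all add: fl_def d)
  have z6: "C 0 2 0 1 = 0" by (rule fz[of 2 3], simp_all add: fl_def d)
  have z7: "C 0 2 2 3 = 0" by (rule fz[of 2 3], simp_all add: fl_def d)
  have z8: "C 1 3 0 1 = 0" by (rule fz[of 2 3], simp_all add: fl_def d)
  have z9: "C 1 3 2 3 = 0" by (rule fz[of 2 3], simp_all add: fl_def d)
  have z10: "C 0 3 0 1 = 0" by (rule fz[of 2 3], simp_all add: fl_def d)
  have z11: "C 0 3 2 3 = 0" by (rule fz[of 2 3], simp_all add: fl_def d)
  have z12: "C 2 3 0 2 = 0" by (rule fz[of 2 3], simp_all add: fl_def d)
  have z13: "C 2 3 1 2 = 0" by (rule fz[of 2 3], simp_all add: fl_def d)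
  have z14: "C 2 3 0 3 = 0" by (rule fz[of 2 3], simp_all add: fl_def d)
  have z15: "C 2 3 1 3 = 0" by (rule fz[of 2 3], simp_all add: fl_def d)
  have f1: "C 1 0 0 1 = w" using TrA TrB d unfolding w_def by simp
  have f2: "C 1 2 0 2 = u" using PS[of 1 2 0 2] U[of 2] d unfolding u_def by simp
  have f3: "C 0 2 1 2 = u" using U[of 2] d unfolding u_def by simp
  have f4: "C 1 3 0 3 = u" using PS[of 1 3 0 3] U[of 3] d unfolding u_def by simp
  have f5: "C 0 3 1 3 = u" using U[of 3] d unfolding u_def by simp
  have f6: "C 1 2 1 2 = 0" "C 1 3 1 3 = 0" "C 0 2 0 2 = 0" "C 0 3 0 3 = 0" using T0gen d by auto
  have s1: "C 1 2 1 3 = sw 3 1 * sw 3 2 * sw 3 1 * sw 3 3 * C (tau 2 3 1) (tau 2 3 2) (tau 2 3 1) (tau 2 3 3)"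
    by (rule swap_eq, simp_all add: d)
  have f7: "C 1 2 1 3 = 0" using s1 PS[of 1 3 1 2] d by (simp add: sw_def tau_def)
  have s2: "C 0 2 0 3 = sw 3 0 * sw 3 2 * sw 3 0 * sw 3 3 * C (tau 2 3 0) (tau 2 3 2) (tau 2 3 0) (tau 2 3 3)"
    by (rule swap_eq, simp_all add: d)
  have f8: "C 0 2 0 3 = 0" using s2 PS[of 0 3 0 2] d by (simp add: sw_def tau_def)
  have s3: "C 0 2 1 3 = sw 3 0 * sw 3 2 * sw 3 1 * sw 3 3 * C (tau 2 3 0) (tau 2 3 2) (tau 2 3 1) (tau 2 3 3)"
    by (rule swap_eq, simp_all add: d)
  have s3': "C 0 2 1 3 = - C 0 3 1 2" using s3 by (simp add: sw_def tau_def)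
  have bi: "C 0 1 2 3 + C 0 2 3 1 + C 0 3 1 2 = 0" by (rule BI, simp_all add: d)
  have a2: "C 0 2 3 1 = - C 0 2 1 3" by (rule A2, simp_all add: d)
  have f9: "C 0 2 1 3 = g / 2" using s3' bi a2 unfolding g_def by simp
  have f10: "C 0 3 1 2 = - g / 2" using s3' f9 by simp
  have f11: "C 1 2 0 3 = - g / 2" using PS[of 1 2 0 3] f10 d by simp
  have f12: "C 1 3 0 2 = g / 2" using PS[of 1 3 0 2] f9 d by simp
  have f13: "C 1 0 2 3 = - g" using A1[of 1 0 2 3] d unfolding g_def by simp
  have f14: "C 2 3 0 1 = g" using PS[of 2 3 0 1] d unfolding g_def by simp
  have f15: "C 2 3 2 3 = w" unfolding w_def ww_def ..
  have f16: "C 0 3 0 2 = 0" using PS[of 0 3 0 2] f8 d by simp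
  have f17: "C 1 3 1 2 = 0" using PS[of 1 3 1 2] f7 d by simp
  note facts = z0 z1 z2 z3 z4 z5 z6 z7 z8 z9 z10 z11 z12 z13 z14 z15 f16 f17 f1 f2 f3 f4 f5 f6 f7 f8 f9 f10 f11 f12 f13 f14 f15
  define cw where "cw = complex_of_real w"
  define cu where "cu = complex_of_real u"
  define cg where "cg = complex_of_real g"
  define Mr :: "real list list" where "Mr = [[w,0,0,0,0,-g],[0,u,0,-g/2,0,0],[0,0,u,0,g/2,0],[0,g/2,0,u,0,0],[0,0,-g/2,0,u,0],[g,0,0,0,0,w]]"
  define Am where "Am = mk (map (map complex_of_real) Mr)"
  define Pm where "Pm = mk [[1,0,0,1,0,0],[0,1,0,0,1,0],[0,0,1,0,0,1],[0,-\<i>,0,0,\<i>,0],[0,0,\<i>,0,0,-\<i>],[-\<i>,0,0,\<i>,0,0]]"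
  define Qm where "Qm = mk [[1/2,0,0,0,0,\<i>/2],[0,1/2,0,\<i>/2,0,0],[0,0,1/2,0,-\<i>/2,0],[1/2,0,0,0,0,-\<i>/2],[0,1/2,0,-\<i>/2,0,0],[0,0,1/2,0,\<i>/2,0]]"
  define Bm where "Bm = mk [[(cw+\<i>*cg),0,0,0,0,0],[0,(cu+\<i>*cg/2),0,0,0,0],[0,0,(cu+\<i>*cg/2),0,0,0],[0,0,0,(cw-\<i>*cg),0,0],[0,0,0,0,(cu-\<i>*cg/2),0],[0,0,0,0,0,(cu-\<i>*cg/2)]]"
  have AW: "weyl_op_mat d C = Am"
  proof (rule eq_matI)
    fix i j assume "i < dim_row Am" "j < dim_col Am"
    hence i: "i < 6" and j: "j < 6" unfolding Am_def by auto
    have l: "length (bivector_pairs d) = 6" by (simp add: d bp4)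
    show "weyl_op_mat d C $$ (i,j) = Am $$ (i,j)"
      using i j unfolding Am_def less6
      by (elim disjE, simp_all add: wom_entry l, simp_all add: d bp4 swap01_def Mr_def z0 z1 z2 z3 z4 z5 z6 z7 z8 z9 z10 z11 z12 z13 z14 z15 f16 f17 f1 f2 f3 f4 f5 f6 f7 f8 f9 f10 f11 f12 f13 f14 f15, 
          simp_all add: facts[unfolded One_nat_def])
  next
    show "dim_row (weyl_op_mat d C) = dim_row Am" "dim_col (weyl_op_mat d C) = dim_col Am"
      using wom_carrier by (auto simp: d bp4 Am_def)
  qed
  have PQ: "Pm * Qm = 1\<^sub>m 6"
    unfolding Pm_def Qm_def mk_mult
    by (rule eq_matI, auto simp: less6 sum6 algebra_simps)
  have QP: "Qm * Pm = 1\<^sub>m 6"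
    unfolding Pm_def Qm_def mk_mult
    by (rule eq_matI, auto simp: less6 sum6 algebra_simps)
  have AP: "Am * Pm = Pm * Bm"
    unfolding Pm_def Am_def Bm_def mk_mult Mr_def
    by (rule eq_matI, auto simp: less6 sum6 algebra_simps cw_def cu_def cg_def)
  have "Am = Am * (Pm * Qm)" by (simp add: PQ Am_def)
  also have "\<dots> = (Am * Pm) * Qm" by (simp add: Am_def Pm_def Qm_def assoc_mult_mat[of _ 6 6 _ 6 _ 6])
  also have "\<dots> = Pm * Bm * Qm" by (simp add: AP)
  finally have e: "Am = Pm * Bm * Qm" .
  have carr: "{Am,Bm,Pm,Qm} \<subseteq> carrier_mat 6 6" by (simp add: Am_def Bm_def Pm_def Qm_def)
  have dr: "dim_row Am = 6" by (simp add: Am_def)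
  have wit: "similar_mat_wit Am Bm Pm Qm" unfolding similar_mat_wit_def Let_def dr
    using carr PQ QP e by blast
  have sim: "similar_mat Am Bm" unfolding similar_mat_def using wit by blast
  have Bc: "Bm \<in> carrier_mat 6 6" by (simp add: Bm_def)
  have ut: "upper_triangular Bm" unfolding upper_triangular_def Bm_def
    by (auto simp: less6, auto simp: numeral_eq_Suc less_Suc_eq)
  have "char_poly (weyl_op_mat d C) = char_poly Bm" using AW char_poly_similar[OF sim] by simp
  also have "\<dots> = prod_list (map (\<lambda>a. [:-a, 1:]) (diag_mat Bm))"
    by (rule char_poly_upper_triangular[OF Bc ut])
  also have "diag_mat Bm = [cw+\<i>*cg, cu+\<i>*cg/2, cu+\<i>*cg/2, cw-\<i>*cg, cu-\<i>*cg/2, cu-\<i>*cg/2]"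
    unfolding diag_mat_def Bm_def by (simp add: eval_nat_numeral upt_Suc)
  finally have cp: "char_poly (weyl_op_mat d C) = prod_list (map (\<lambda>a. [:-a, 1:]) [cw+\<i>*cg, cu+\<i>*cg/2, cu+\<i>*cg/2, cw-\<i>*cg, cu-\<i>*cg/2, cu-\<i>*cg/2])" .
  have A34: "A34 C = g" unfolding A34_def g_def ..
  have e1: "-(1/4) * (complex_of_real (Rbar d C) + 2 * \<i> * complex_of_real (A34 C)) = cu-\<i>*cg/2"
    unfolding R A34 cu_def cg_def uw by (simp add: field_simps)
  have e2: "-(1/4) * (complex_of_real (Rbar d C) - 2 * \<i> * complex_of_real (A34 C)) = cu+\<i>*cg/2"
    unfolding R A34 cu_def cg_def uw by (simp add: field_simps)
  have e3: "(1/2) * (complex_of_real (Rbar d C) + 2 * \<i> * complex_of_real (A34 C)) = cw+\<i>*cg"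
    unfolding R A34 cw_def cg_def by (simp add: field_simps)
  have e4: "(1/2) * (complex_of_real (Rbar d C) - 2 * \<i> * complex_of_real (A34 C)) = cw-\<i>*cg"
    unfolding R A34 cw_def cg_def by (simp add: field_simps)
  show ?thesis unfolding Let_def e1 e2 e3 e4 cp list.map prod_list.Cons prod_list.Nil power2_eq_square mult_1_right
    by (simp only: mult_ac)
qed

end

theorem mainTheorem2:
  fixes d :: nat and C :: "nat \<Rightarrow> nat \<Rightarrow> nat \<Rightarrow> nat \<Rightarrow> real"
  assumes "4 \<le> d" and "is_weyl d C" and "so_invariant d C"
  shows "(d = 4 \<longrightarrow>
            (let R = complex_of_real (Rbar d C); A = complex_of_real (A34 C) in
             char_poly (weyl_op_mat d C) =
               [:-(-(1/4) * (R + 2 * \<i> * A)), 1:] ^ 2 *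
               [:-(-(1/4) * (R - 2 * \<i> * A)), 1:] ^ 2 *
               [:-((1/2) * (R + 2 * \<i> * A)), 1:] *
               [:-((1/2) * (R - 2 * \<i> * A)), 1:]))
       \<and> (4 < d \<longrightarrow>
            (let R = complex_of_real (Rbar d C); D = of_nat (d - 2) :: complex in
             char_poly (weyl_op_mat d C) =
               [:-(-(1 / (2 * D)) * R), 1:] ^ (2 * (d - 2)) *
               [:-((1/2) * R), 1:] *
               [:-((1 / (D * (D - 1))) * R), 1:] ^ ((d - 2) * (d - 3) div 2)))"
proof -
  interpret wctx d C using assms by unfold_locales
  show ?thesis
  proof (intro conjI impI)
    assume d: "d = 4"
    show "let R = complex_of_real (Rbar d C); A = complex_of_real (A34 C) in
             char_poly (weyl_op_mat d C) =
               [:-(-(1/4) * (R + 2 * \<i> * A)), 1:] ^ 2 *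
               [:-(-(1/4) * (R - 2 * \<i> * A)), 1:] ^ 2 *
               [:-((1/2) * (R + 2 * \<i> * A)), 1:] *
               [:-((1/2) * (R - 2 * \<i> * A)), 1:]"
      using four_case[OF d] by (simp add: Let_def)
  next
    assume d: "4 < d"
    show "let R = complex_of_real (Rbar d C); D = of_nat (d - 2) :: complex in
             char_poly (weyl_op_mat d C) =
               [:-(-(1 / (2 * D)) * R), 1:] ^ (2 * (d - 2)) *
               [:-((1/2) * R), 1:] *
               [:-((1 / (D * (D - 1))) * R), 1:] ^ ((d - 2) * (d - 3) div 2)"
      using big_case d by (simp add: Let_def)
  qed
qed

end
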